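(* Let $p\in(\tfrac12,1)$, $d=p/(1-p)$ (so $d>1$), $c_0>0$, $c_1=0$, $\beta_0\in\mathbb{R}$ and $\beta_1>0$, and assume $-1<\theta_l<\theta_h<1$ where $\theta_l=\frac{-\sqrt{2c_0}-\beta_1}{d+1}$ and $\theta_h=\frac{\sqrt{2c_0}-\beta_1}{d+1}$. For each $N$, let $G_N$ denote the expected gain $\mathbb{E}\big[\bar\varepsilon_1^2-\beta_1^2+2\beta_1\bar\varepsilon_0-\bar\varepsilon_0^2\ \big|\ \mathcal P_N\big]$ of an agent with $x=1$ from reporting $r=0$ instead of $r=1$, conditional on the pivotal event $\mathcal P_N=\{\bar\varepsilon_1-\bar\varepsilon_0\notin(-\sqrt{2c_0}-\beta_1,\ \sqrt{2c_0}-\beta_1)\}$ in which the estimated coefficient $b_1$ is nonzero. Then incentive compatibility is violated in the $N\to\infty$ limit (i.e. $\lim_{N\to\infty}G_N>0$) if and only if $$\beta_1<\frac{c_0}{\sqrt{2c_0}+\frac{2d}{d-1}}.$$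
   Context: Setting: an agent has a binary characteristic $x\in\{0,1\}$ and ideal action $f(x)=\beta_0+\beta_1x$. For each $x\in\{0,1\}$ a statistician obtains $N$ observations $y_x^n=f(x)+\varepsilon_x^n$, $n=1,\dots,N$, where all $\varepsilon_x^n$ are i.i.d. with $\varepsilon_x^n=-1$ with probability $p$ and $\varepsilon_x^n=d$ with probability $1-p$ (mean zero). Let $\bar\varepsilon_x=\frac1N\sum_{n=1}^N\varepsilon_x^n$. The statistician computes $(b_0,b_1)$ solving $\min_{b_0,b_1}\sum_{x=0,1}\sum_{n=1}^N(y_x^n-b_0-b_1x)^2+N c_0\mathbf{1}_{b_1\neq0}$, breaking ties in favor of $b_1\neq0$; then $b_1=\beta_1+\bar\varepsilon_1-\bar\varepsilon_0$ if $(\beta_1+\bar\varepsilon_1-\bar\varepsilon_0)^2\ge 2c_0$ and $b_1=0$ otherwise, and $b_0=\tfrac12(\bar y_0+\bar y_1-b_1)$ with $\bar y_x$ the sample means. Given report $r$, the action is $\hat f(r)=b_0+b_1r$ and the agent's payoff is $-(\hat f(r)-f(x))^2$. Incentive compatibility (at parameter $\beta$) requires $\mathbb{E}[\hat f(x)-f(x)]^2\le\mathbb{E}[\hat f(r)-f(x)]^2$ for all $x,r$; for $x=1,r=0$ its violation is equivalent to the conditional expected gain $G_N$ in the claim being strictly positive. *)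

theory Defs
  imports "HOL-Probability.Probability"
begin

text \<open>The noise ratio d = p/(1-p), so that the two-point noise has mean zero.\<close>
definition dval :: "real \<Rightarrow> real" where
  "dval p = p / (1 - p)"

definition noise_pmf :: "real \<Rightarrow> real pmf" where
  "noise_pmf p = map_pmf (\<lambda>b. if b then -1 else dval p) (bernoulli_pmf p)"

definition sample_pmf :: "real \<Rightarrow> nat \<Rightarrow> (nat \<Rightarrow> real) pmf" where
  "sample_pmf p N = Pi_pmf {..<N} 0 (\<lambda>_. noise_pmf p)"

text \<open>Joint law of the noise samples for x = 0 and x = 1 (independent).\<close>
definition joint_pmf :: "real \<Rightarrow> nat \<Rightarrow> ((nat \<Rightarrow> real) \<times> (nat \<Rightarrow> real)) pmf" where
  "joint_pmf p N = pair_pmf (sample_pmf p N) (sample_pmf p N)"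

definition sample_mean :: "nat \<Rightarrow> (nat \<Rightarrow> real) \<Rightarrow> real" where
  "sample_mean N e = (\<Sum>n<N. e n) / real N"

definition pivotal :: "real \<Rightarrow> real \<Rightarrow> nat \<Rightarrow> (nat \<Rightarrow> real) \<times> (nat \<Rightarrow> real) \<Rightarrow> bool" where
  "pivotal c0 beta1 N w =
     (let D = sample_mean N (snd w) - sample_mean N (fst w)
      in \<not> (- sqrt (2 * c0) - beta1 < D \<and> D < sqrt (2 * c0) - beta1))"

definition gain :: "real \<Rightarrow> nat \<Rightarrow> (nat \<Rightarrow> real) \<times> (nat \<Rightarrow> real) \<Rightarrow> real" where
  "gain beta1 N w =
     (let m0 = sample_mean N (fst w); m1 = sample_mean N (snd w)
      in m1\<^sup>2 - beta1\<^sup>2 + 2 * beta1 * m0 - m0\<^sup>2)"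

definition G :: "real \<Rightarrow> real \<Rightarrow> real \<Rightarrow> nat \<Rightarrow> real" where
  "G p c0 beta1 N =
     measure_pmf.expectation (joint_pmf p N)
        (\<lambda>w. if pivotal c0 beta1 N w then gain beta1 N w else 0)
     / measure_pmf.prob (joint_pmf p N) {w. pivotal c0 beta1 N w}"

end

theory Submission
  imports Defs
begin


definition W :: "nat \<Rightarrow> real \<Rightarrow> nat \<Rightarrow> real" where
  "W N r k = real (N choose k) * r ^ k * (1 - r) ^ (N - k)"

definition mm :: "real \<Rightarrow> nat \<Rightarrow> nat \<Rightarrow> real" where
  "mm p N k = (dval p * real N - (dval p + 1) * real k) / real N"

lemma Pi_pmf_map_gen:
  assumes [simp]: "finite A"
  shows "Pi_pmf A dflt' (\<lambda>x. map_pmf f (g x)) =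
     map_pmf (\<lambda>h x. if x \<in> A then f (h x) else dflt') (Pi_pmf A dflt g)"
proof -
  have "Pi_pmf A dflt' (\<lambda>x. map_pmf f (g x)) =
          Pi_pmf A dflt' (\<lambda>x. g x \<bind> (\<lambda>x. return_pmf (f x)))"
    using assms by (simp add: map_pmf_def Pi_pmf_bind)
  also have "\<dots> = Pi_pmf A dflt g \<bind> (\<lambda>h. return_pmf (\<lambda>x. if x \<in> A then f (h x) else dflt'))"
   by (subst Pi_pmf_bind[where d' = dflt]) auto
  also have "\<dots> = map_pmf (\<lambda>h x. if x \<in> A then f (h x) else dflt') (Pi_pmf A dflt g)"
    unfolding map_pmf_def by simp
  finally show ?thesis .
qed

lemma sum_split_card:
  fixes d :: real
  shows "(\<Sum>n<N. (if h n then -1 else d)) = d * real N - (d + 1) * real (card {n\<in>{..<N}. h n})"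
proof -
  have "(\<Sum>n<N. (if h n then -1 else d)) = (\<Sum>n<N. d - (d + 1) * (if h n then 1 else 0))"
    by (intro sum.cong) auto
  also have "\<dots> = d * real N - (d + 1) * (\<Sum>n<N. (if h n then 1 else 0))"
    by (simp add: sum_subtractf sum_distrib_left)
  also have "(\<Sum>n<N. (if h n then 1 else 0::real)) = real (card {n\<in>{..<N}. h n})"
  proof -
    have "(\<Sum>n<N. (if h n then 1 else 0::real)) = (\<Sum>n\<in>{n\<in>{..<N}. h n}. 1)"
      by (intro sum.mono_neutral_cong_right) auto
    thus ?thesis by simp
  qed
  finally show ?thesis .
qed

lemma sample_dist:
  assumes "0 \<le> p" "p \<le> 1"
  shows "map_pmf (sample_mean N) (sample_pmf p N) = map_pmf (mm p N) (binomial_pmf N p)"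
proof -
  have "sample_pmf p N = map_pmf (\<lambda>h x. if x \<in> {..<N} then (if h x then -1 else dval p) else 0)
          (Pi_pmf {..<N} False (\<lambda>_. bernoulli_pmf p))"
    unfolding sample_pmf_def noise_pmf_def by (rule Pi_pmf_map_gen) simp
  moreover have "(\<lambda>h. sample_mean N (\<lambda>x. if x \<in> {..<N} then (if h x then -1 else dval p) else 0))
     = (\<lambda>h. mm p N (card {n\<in>{..<N}. h n}))"
  proof
    fix h :: "nat \<Rightarrow> bool"
    have "(\<Sum>x<N. if x \<in> {..<N} then (if h x then -1 else dval p) else 0) = (\<Sum>x<N. (if h x then -1 else dval p))"
      by (intro sum.cong) auto
    thus "sample_mean N (\<lambda>x. if x \<in> {..<N} then (if h x then -1 else dval p) else 0) = mm p N (card {n\<in>{..<N}. h n})"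
      unfolding sample_mean_def mm_def sum_split_card by simp
  qed
  ultimately have "map_pmf (sample_mean N) (sample_pmf p N) =
     map_pmf (\<lambda>h. mm p N (card {n\<in>{..<N}. h n})) (Pi_pmf {..<N} False (\<lambda>_. bernoulli_pmf p))"
    by (simp add: pmf.map_comp o_def)
  also have "\<dots> = map_pmf (mm p N) (map_pmf (\<lambda>h. card {n\<in>{..<N}. h n}) (Pi_pmf {..<N} False (\<lambda>_. bernoulli_pmf p)))"
    by (simp add: pmf.map_comp o_def)
  also have "map_pmf (\<lambda>h. card {n\<in>{..<N}. h n}) (Pi_pmf {..<N} False (\<lambda>_. bernoulli_pmf p)) = binomial_pmf N p"
    by (rule binomial_pmf_altdef'[symmetric]) (use assms in auto)
  finally show ?thesis .
qed

lemma joint_expectation: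
  assumes "0 \<le> p" "p \<le> 1"
  shows "measure_pmf.expectation (joint_pmf p N) (\<lambda>w. F (sample_mean N (fst w)) (sample_mean N (snd w)))
    = (\<Sum>k0\<le>N. \<Sum>k1\<le>N. W N p k0 * W N p k1 * F (mm p N k0) (mm p N k1))"
proof -
  let ?S = "sample_pmf p N" and ?B = "binomial_pmf N p"
  have "measure_pmf.expectation (joint_pmf p N) (\<lambda>w. F (sample_mean N (fst w)) (sample_mean N (snd w)))
     = measure_pmf.expectation (map_pmf (\<lambda>(a,b). (sample_mean N a, sample_mean N b)) (pair_pmf ?S ?S)) (\<lambda>(a,b). F a b)"
    unfolding joint_pmf_def integral_map_pmf by (simp add: case_prod_beta)
  also have "map_pmf (\<lambda>(a,b). (sample_mean N a, sample_mean N b)) (pair_pmf ?S ?S)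
      = map_pmf (\<lambda>(a,b). (mm p N a, mm p N b)) (pair_pmf ?B ?B)"
    unfolding map_pair sample_dist[OF assms] ..
  also have "measure_pmf.expectation \<dots> (\<lambda>(a,b). F a b) = 
     measure_pmf.expectation (pair_pmf ?B ?B) (\<lambda>(a,b). F (mm p N a) (mm p N b))"
    unfolding integral_map_pmf by (simp add: case_prod_unfold)
  also have "\<dots> = (\<Sum>x\<in>{..N}\<times>{..N}. (\<lambda>(a,b). F (mm p N a) (mm p N b)) x * pmf (pair_pmf ?B ?B) x)"
    by (rule integral_measure_pmf_real) (use assms in \<open>auto simp: set_pmf_binomial_eq split: if_splits\<close>)
  also have "\<dots> = (\<Sum>k0\<le>N. \<Sum>k1\<le>N. W N p k0 * W N p k1 * F (mm p N k0) (mm p N k1))"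
    unfolding sum.cartesian_product
    using assms by (auto simp: pmf_pair W_def mult_ac intro!: sum.cong)
  finally show ?thesis .
qed



lemma W_nonneg: "0 \<le> r \<Longrightarrow> r \<le> 1 \<Longrightarrow> 0 \<le> W N r k"
  unfolding W_def by simp

lemma W_pos: "0 < r \<Longrightarrow> r < 1 \<Longrightarrow> k \<le> N \<Longrightarrow> 0 < W N r k"
  unfolding W_def by simp

lemma W_sum_one: "(\<Sum>k\<le>N. W N r k) = 1"
proof -
  have "(\<Sum>k\<le>N. W N r k) = (r + (1 - r)) ^ N"
    unfolding binomial_ring W_def by (simp add: mult_ac)
  thus ?thesis by simp
qed

lemma W_ratio:
  assumes "k < N"
  shows "W N r (Suc k) * (real (Suc k) * (1 - r)) = W N r k * (real (N - k) * r)"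
proof -
  have c: "real (Suc k) * real (N choose Suc k) = real (N - k) * real (N choose k)"
  proof -
    have "Suc k * (N choose Suc k) = N * (N - 1 choose k)" by (rule binomial_absorption)
    also have "\<dots> = (N - k) * (N choose k)" by (rule binomial_absorb_comp[symmetric])
    finally show ?thesis by (metis of_nat_mult)
  qed
  have e: "N - k = Suc (N - Suc k)" using assms by simp
  have pw: "(1 - r) ^ (N - k) = (1 - r) ^ (N - Suc k) * (1 - r)" by (subst e) simp
  have "W N r (Suc k) * (real (Suc k) * (1 - r)) = (real (Suc k) * real (N choose Suc k)) * (r^k * r * (1-r)^(N - Suc k) * (1-r))"
    unfolding W_def by (simp add: mult_ac)
  also have "\<dots> = (real (N-k) * real (N choose k)) * (r^k * r * (1-r)^(N - Suc k) * (1-r))" using c by simp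
  also have "\<dots> = W N r k * (real (N - k) * r)" unfolding W_def pw by (simp add: mult_ac)
  finally show ?thesis .
qed

lemma W_tilt:
  assumes "0 < p" "p < 1" "0 < q" "q < 1" "k \<le> N"
  shows "W N p k = W N q k * ((1 - p) / (1 - q)) ^ N * (p * (1 - q) / (q * (1 - p))) ^ k"
proof -
  have N: "N = k + (N - k)" using assms by simp
  define A where "A = (1 - p) / (1 - q)"
  define R where "R = p * (1 - q) / (q * (1 - p))"
  have AR: "A * R = p / q"
  proof -
    have "A * R = ((1 - p) * (p * (1 - q))) / ((1 - q) * (q * (1 - p)))" unfolding A_def R_def by simp
    also have "\<dots> = ((1 - p) * (1 - q) * p) / ((1 - p) * (1 - q) * q)" by (simp add: mult_ac)
    also have "\<dots> = p / q" using assms by (intro mult_divide_mult_cancel_left) simp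
    finally show ?thesis .
  qed
  have "A ^ N = A ^ k * A ^ (N - k)"
    by (subst N) (simp add: power_add)
  hence "A ^ N * R ^ k = (p / q) ^ k * A ^ (N - k)"
    by (simp add: AR[symmetric] power_mult_distrib mult_ac)
  hence "W N q k * A ^ N * R ^ k = real (N choose k) * (q ^ k * (p / q) ^ k) * ((1 - q) ^ (N - k) * A ^ (N - k))"
    unfolding W_def by (simp add: mult_ac)
  also have "q ^ k * (p / q) ^ k = p ^ k" using assms by (simp add: power_mult_distrib[symmetric])
  also have "(1 - q) ^ (N - k) * A ^ (N - k) = (1 - p) ^ (N - k)" unfolding A_def 
    using assms by (simp add: power_mult_distrib[symmetric])
  finally have X: "W N q k * A ^ N * R ^ k = W N p k" unfolding W_def by (simp add: mult_ac)
  show ?thesis using X[symmetric] unfolding A_def R_def .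
qed



lemma hoeffding_sum:
  assumes "0 < r" "r < 1" "0 < N" "0 \<le> \<delta>"
  shows "(\<Sum>k\<in>{k\<in>{..N}. \<delta> \<le> \<bar>real k / real N - r\<bar>}. W N r k) \<le> 2 * exp (- 2 * real N * \<delta>\<^sup>2)"
proof -
  have bd: "binomial_distribution r" unfolding binomial_distribution_def using assms by simp
  have "measure_pmf.prob (binomial_pmf N r) {x. \<delta> \<le> \<bar>real x / real N - r\<bar>}
     = measure_pmf.prob (binomial_pmf N r) ({x. \<delta> \<le> \<bar>real x / real N - r\<bar>} \<inter> set_pmf (binomial_pmf N r))"
    by (rule measure_Int_set_pmf[symmetric])
  also have "{x. \<delta> \<le> \<bar>real x / real N - r\<bar>} \<inter> set_pmf (binomial_pmf N r) = {k\<in>{..N}. \<delta> \<le> \<bar>real k / real N - r\<bar>}"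
    using assms by auto
  also have "measure_pmf.prob (binomial_pmf N r) \<dots> = (\<Sum>k\<in>{k\<in>{..N}. \<delta> \<le> \<bar>real k / real N - r\<bar>}. W N r k)"
    by (subst measure_measure_pmf_finite) (use assms in \<open>auto simp: W_def intro!: sum.cong\<close>)
  finally have "(\<Sum>k\<in>{k\<in>{..N}. \<delta> \<le> \<bar>real k / real N - r\<bar>}. W N r k) = 
       measure_pmf.prob (binomial_pmf N r) {x. \<delta> \<le> \<bar>real x / real N - r\<bar>}" ..
  also have "\<dots> \<le> 2 * exp (real_of_int (- 2 * int N) * \<delta>\<^sup>2)"
    by (rule binomial_distribution.prob_abs_ge'[OF bd assms(3) assms(4)])
  finally show ?thesis by simp
qed

lemma mode_exists:
  assumes "0 < r" "r < 1"
  shows "\<exists>k\<le>N. 1 / real (N + 1) \<le> W N r k \<and> real (N + 1) * r - 1 \<le> real k \<and> real k \<le> real (N + 1) * r"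
proof -
  define M where "M = Max (W N r ` {..N})"
  have fin: "finite (W N r ` {..N})" and ne: "W N r ` {..N} \<noteq> {}" by auto
  have "M \<in> W N r ` {..N}" unfolding M_def by (rule Max_in[OF fin ne])
  then obtain k where k: "k \<le> N" "W N r k = M" by auto
  have ge: "W N r j \<le> W N r k" if "j \<le> N" for j
    unfolding k(2) M_def using fin that by (intro Max_ge) auto
  have Wk: "0 < W N r k" using W_pos[OF assms k(1)] .
  have "1 = (\<Sum>j\<le>N. W N r j)" by (simp add: W_sum_one)
  also have "\<dots> \<le> (\<Sum>j\<le>N. W N r k)" by (intro sum_mono ge) auto
  also have "\<dots> = real (N + 1) * W N r k" by simp
  finally have low: "1 / real (N + 1) \<le> W N r k" by (simp add: field_simps)
  have lb: "real (N + 1) * r - 1 \<le> real k"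
  proof (cases "k < N")
    case True
    have "W N r k * (real (N - k) * r) = W N r (Suc k) * (real (Suc k) * (1 - r))"
      using W_ratio[OF True] by simp
    also have "\<dots> \<le> W N r k * (real (Suc k) * (1 - r))"
      using ge[of "Suc k"] True assms by (intro mult_right_mono) auto
    finally have "real (N - k) * r \<le> real (Suc k) * (1 - r)" using Wk by simp
    thus ?thesis using True by (simp add: of_nat_diff algebra_simps)
  next
    case False
    hence "k = N" using k by simp
    have "r * real N \<le> real N" using assms by (simp add: mult_left_le_one_le)
    thus ?thesis using \<open>k = N\<close> assms by (simp add: algebra_simps)
  qed
  have ub: "real k \<le> real (N + 1) * r"
  proof (cases k)
    case 0 thus ?thesis using assms by simp
  next
    case (Suc j)
    have jN: "j < N" using k Suc by simp
    have "W N r k * (real (Suc j) * (1 - r)) = W N r j * (real (N - j) * r)"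
      using W_ratio[OF jN] Suc by simp
    also have "\<dots> \<le> W N r k * (real (N - j) * r)"
      using ge[of j] jN assms by (intro mult_right_mono) auto
    finally have "real (Suc j) * (1 - r) \<le> real (N - j) * r" using Wk by simp
    thus ?thesis using Suc jN by (simp add: of_nat_diff algebra_simps)
  qed
  show ?thesis using k(1) low lb ub by blast
qed



lemma conc_bound:
  fixes u g :: "'a \<Rightarrow> real"
  assumes fin: "finite A" and u: "\<And>x. x \<in> A \<Longrightarrow> 0 \<le> u x" and S: "0 < sum u A"
    and near: "\<And>x. x \<in> A \<Longrightarrow> x \<notin> F \<Longrightarrow> \<bar>g x - c\<bar> \<le> e"
    and all: "\<And>x. x \<in> A \<Longrightarrow> \<bar>g x - c\<bar> \<le> B" and e: "0 \<le> e"
  shows "\<bar>(\<Sum>x\<in>A. u x * g x) / sum u A - c\<bar> \<le> e + B * sum u (A \<inter> F) / sum u A"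
proof -
  have eq: "(\<Sum>x\<in>A. u x * g x) / sum u A - c = (\<Sum>x\<in>A. u x * (g x - c)) / sum u A"
  proof -
    have "(\<Sum>x\<in>A. u x * (g x - c)) = (\<Sum>x\<in>A. u x * g x) - c * sum u A"
      by (simp add: right_diff_distrib sum_subtractf sum_distrib_left mult_ac)
    thus ?thesis using S by (simp add: diff_divide_distrib)
  qed
  have "\<bar>\<Sum>x\<in>A. u x * (g x - c)\<bar> \<le> (\<Sum>x\<in>A. u x * \<bar>g x - c\<bar>)"
    by (rule order_trans[OF sum_abs]) (simp add: abs_mult u)
  also have "\<dots> = (\<Sum>x\<in>A \<inter> F. u x * \<bar>g x - c\<bar>) + (\<Sum>x\<in>A - F. u x * \<bar>g x - c\<bar>)"
    using fin by (rule sum.Int_Diff)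
  also have "\<dots> \<le> (\<Sum>x\<in>A \<inter> F. u x * B) + (\<Sum>x\<in>A - F. u x * e)"
    by (intro add_mono sum_mono mult_left_mono) (auto simp: u near all)
  finally have c1: "\<bar>\<Sum>x\<in>A. u x * (g x - c)\<bar> \<le> (\<Sum>x\<in>A \<inter> F. u x * B) + (\<Sum>x\<in>A - F. u x * e)" .
  have c2: "(\<Sum>x\<in>A - F. u x * e) \<le> (\<Sum>x\<in>A. u x * e)"
    using fin u e by (intro sum_mono2) auto
  have c3: "(\<Sum>x\<in>A \<inter> F. u x * B) = sum u (A \<inter> F) * B" by (rule sum_distrib_right[symmetric])
  have c4: "(\<Sum>x\<in>A. u x * e) = sum u A * e" by (rule sum_distrib_right[symmetric])
  have c5: "sum u (A \<inter> F) * B = B * sum u (A \<inter> F)" "sum u A * e = e * sum u A" by (rule mult.commute)+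
  have "\<bar>\<Sum>x\<in>A. u x * (g x - c)\<bar> \<le> B * sum u (A \<inter> F) + e * sum u A" using c1 c2 c3 c4 c5 by linarith
  hence "\<bar>\<Sum>x\<in>A. u x * (g x - c)\<bar> / sum u A \<le> (B * sum u (A \<inter> F) + e * sum u A) / sum u A"
    using S by (intro divide_right_mono) auto
  also have "\<dots> = e + B * sum u (A \<inter> F) / sum u A" 
  proof -
    have "(B * sum u (A \<inter> F) + e * sum u A) / sum u A = B * sum u (A \<inter> F) / sum u A + e * sum u A / sum u A"
      by (rule add_divide_distrib)
    moreover have "e * sum u A / sum u A = e" using S by simp
    ultimately show ?thesis by linarith
  qed
  finally have fin2: "\<bar>\<Sum>x\<in>A. u x * (g x - c)\<bar> / sum u A \<le> e + B * sum u (A \<inter> F) / sum u A" .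
  have ab: "\<bar>(\<Sum>x\<in>A. u x * (g x - c)) / sum u A\<bar> = \<bar>\<Sum>x\<in>A. u x * (g x - c)\<bar> / sum u A"
    using S by (simp add: abs_divide)
  show ?thesis unfolding eq ab by (rule fin2)
qed




definition gv :: "real \<Rightarrow> real \<Rightarrow> real \<Rightarrow> real" where
  "gv b1 m0 m1 = m1\<^sup>2 - b1\<^sup>2 + 2 * b1 * m0 - m0\<^sup>2"

definition PVf :: "real \<Rightarrow> real \<Rightarrow> real \<Rightarrow> real \<Rightarrow> bool" where
  "PVf c0 b1 m0 m1 = (\<not> (- sqrt (2 * c0) - b1 < m1 - m0 \<and> m1 - m0 < sqrt (2 * c0) - b1))"

lemma prob_as_exp:
  "measure_pmf.prob M {w. P w} = measure_pmf.expectation M (\<lambda>w. if P w then 1 else 0)"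
proof -
  have "measure_pmf.expectation M (indicator {w. P w}) = measure_pmf.prob M ({w. P w} \<inter> space (measure_pmf M))"
    by simp
  moreover have "indicator {w. P w} = (\<lambda>w. if P w then 1 else (0::real))"
    by (auto simp: indicator_def)
  ultimately show ?thesis by simp
qed

lemma G_sums:
  assumes "0 \<le> p" "p \<le> 1"
  shows "G p c0 b1 N =
    (\<Sum>x\<in>{x\<in>{..N}\<times>{..N}. PVf c0 b1 (mm p N (fst x)) (mm p N (snd x))}.
        W N p (fst x) * W N p (snd x) * gv b1 (mm p N (fst x)) (mm p N (snd x))) /
    (\<Sum>x\<in>{x\<in>{..N}\<times>{..N}. PVf c0 b1 (mm p N (fst x)) (mm p N (snd x))}. W N p (fst x) * W N p (snd x))"
proof -
  have num: "measure_pmf.expectation (joint_pmf p N) (\<lambda>w. if pivotal c0 b1 N w then gain b1 N w else 0)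
     = (\<Sum>k0\<le>N. \<Sum>k1\<le>N. W N p k0 * W N p k1 * (\<lambda>m0 m1. if PVf c0 b1 m0 m1 then gv b1 m0 m1 else 0) (mm p N k0) (mm p N k1))"
  proof -
    have "(\<lambda>w. if pivotal c0 b1 N w then gain b1 N w else 0) = (\<lambda>w. (\<lambda>m0 m1. if PVf c0 b1 m0 m1 then gv b1 m0 m1 else 0) (sample_mean N (fst w)) (sample_mean N (snd w)))"
      by (auto simp: fun_eq_iff pivotal_def gain_def PVf_def gv_def Let_def)
    thus ?thesis using joint_expectation[OF assms] by simp
  qed
  have den: "measure_pmf.prob (joint_pmf p N) {w. pivotal c0 b1 N w}
     = (\<Sum>k0\<le>N. \<Sum>k1\<le>N. W N p k0 * W N p k1 * (\<lambda>m0 m1. if PVf c0 b1 m0 m1 then 1 else 0) (mm p N k0) (mm p N k1))"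
  proof -
    have "(\<lambda>w. if pivotal c0 b1 N w then 1 else 0) = (\<lambda>w. (\<lambda>m0 m1. if PVf c0 b1 m0 m1 then 1 else (0::real)) (sample_mean N (fst w)) (sample_mean N (snd w)))"
      by (auto simp: fun_eq_iff pivotal_def PVf_def Let_def)
    thus ?thesis unfolding prob_as_exp using joint_expectation[OF assms] by simp
  qed
  have s1: "(\<Sum>k0\<le>N. \<Sum>k1\<le>N. f k0 k1) = (\<Sum>x\<in>{..N}\<times>{..N}. f (fst x) (snd x))" for f :: "nat \<Rightarrow> nat \<Rightarrow> real"
    unfolding sum.cartesian_product by (simp add: split_beta')
  show ?thesis unfolding G_def num den s1
    by (simp add: sum.inter_filter[symmetric] if_distrib cong: if_cong)
qed

lemma gain_lip:
  fixes d b1 m0 m1 y x :: real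
  assumes "1 \<le> d" "0 \<le> b1" "-1 \<le> m0" "m0 \<le> d" "-1 \<le> m1" "m1 \<le> d" "-1 \<le> y" "y \<le> d" "-1 \<le> x" "x \<le> d"
  shows "\<bar>gv b1 m0 m1 - gv b1 y x\<bar> \<le> (2*d + 2*b1) * \<bar>m0 - y\<bar> + 2*d * \<bar>m1 - x\<bar>"
proof -
  have e: "gv b1 m0 m1 - gv b1 y x = (m1 - x) * (m1 + x) + 2 * b1 * (m0 - y) - (m0 - y) * (m0 + y)"
    unfolding gv_def by (simp add: power2_eq_square algebra_simps)
  have a1: "\<bar>m1 + x\<bar> \<le> 2 * d" "\<bar>m0 + y\<bar> \<le> 2 * d" using assms by auto
  have "\<bar>(m1 - x) * (m1 + x)\<bar> \<le> \<bar>m1 - x\<bar> * (2 * d)"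
    unfolding abs_mult by (rule mult_left_mono[OF a1(1)]) simp
  moreover have "\<bar>(m0 - y) * (m0 + y)\<bar> \<le> \<bar>m0 - y\<bar> * (2 * d)"
    unfolding abs_mult by (rule mult_left_mono[OF a1(2)]) simp
  moreover have "\<bar>2 * b1 * (m0 - y)\<bar> = 2 * b1 * \<bar>m0 - y\<bar>" using assms by (simp add: abs_mult)
  ultimately show ?thesis unfolding e by (simp add: algebra_simps) (smt (verit))
qed

lemma far_sum:
  assumes "0 < r0" "r0 < 1" "0 < r1" "r1 < 1" "0 < N" "0 \<le> \<delta>"
  shows "(\<Sum>x\<in>{x\<in>{..N}\<times>{..N}. \<delta> \<le> \<bar>real (fst x) / real N - r0\<bar> \<or> \<delta> \<le> \<bar>real (snd x) / real N - r1\<bar>}.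
            W N r0 (fst x) * W N r1 (snd x)) \<le> 4 * exp (- 2 * real N * \<delta>\<^sup>2)"
proof -
  define S0 where "S0 = {k\<in>{..N}. \<delta> \<le> \<bar>real k / real N - r0\<bar>}"
  define S1 where "S1 = {k\<in>{..N}. \<delta> \<le> \<bar>real k / real N - r1\<bar>}"
  have set: "{x\<in>{..N}\<times>{..N}. \<delta> \<le> \<bar>real (fst x) / real N - r0\<bar> \<or> \<delta> \<le> \<bar>real (snd x) / real N - r1\<bar>}
     = S0 \<times> {..N} \<union> {..N} \<times> S1" unfolding S0_def S1_def by auto
  let ?f = "\<lambda>x. W N r0 (fst x) * W N r1 (snd x)"
  have nn: "0 \<le> ?f x" for x using assms by (intro mult_nonneg_nonneg W_nonneg) auto
  have fin: "finite S0" "finite S1" unfolding S0_def S1_def by auto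
  have "sum ?f (S0 \<times> {..N} \<union> {..N} \<times> S1) = sum ?f (S0 \<times> {..N}) + sum ?f ({..N} \<times> S1) - sum ?f (S0 \<times> {..N} \<inter> {..N} \<times> S1)"
    using fin by (intro sum_Un) auto
  moreover have "0 \<le> sum ?f (S0 \<times> {..N} \<inter> {..N} \<times> S1)" by (intro sum_nonneg nn)
  ultimately have le: "sum ?f (S0 \<times> {..N} \<union> {..N} \<times> S1) \<le> sum ?f (S0 \<times> {..N}) + sum ?f ({..N} \<times> S1)"
    by linarith
  have e0: "sum ?f (S0 \<times> {..N}) = (\<Sum>k\<in>S0. W N r0 k)"
  proof -
    have "sum ?f (S0 \<times> {..N}) = (\<Sum>k0\<in>S0. \<Sum>k1\<le>N. W N r0 k0 * W N r1 k1)"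
      unfolding sum.cartesian_product by (simp add: split_beta')
    also have "\<dots> = (\<Sum>k0\<in>S0. W N r0 k0 * (\<Sum>k1\<le>N. W N r1 k1))" by (simp add: sum_distrib_left)
    finally show ?thesis by (simp add: W_sum_one)
  qed
  have e1: "sum ?f ({..N} \<times> S1) = (\<Sum>k\<in>S1. W N r1 k)"
  proof -
    have "sum ?f ({..N} \<times> S1) = (\<Sum>k0\<le>N. \<Sum>k1\<in>S1. W N r0 k0 * W N r1 k1)"
      unfolding sum.cartesian_product by (simp add: split_beta')
    also have "\<dots> = (\<Sum>k0\<le>N. W N r0 k0 * (\<Sum>k1\<in>S1. W N r1 k1))" by (simp add: sum_distrib_left)
    also have "\<dots> = (\<Sum>k0\<le>N. W N r0 k0) * (\<Sum>k1\<in>S1. W N r1 k1)" by (simp add: sum_distrib_right)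
    finally show ?thesis by (simp add: W_sum_one)
  qed
  have h0: "(\<Sum>k\<in>S0. W N r0 k) \<le> 2 * exp (- 2 * real N * \<delta>\<^sup>2)"
    unfolding S0_def by (rule hoeffding_sum) (use assms in auto)
  have h1: "(\<Sum>k\<in>S1. W N r1 k) \<le> 2 * exp (- 2 * real N * \<delta>\<^sup>2)"
    unfolding S1_def by (rule hoeffding_sum) (use assms in auto)
  show ?thesis unfolding set using le e0 e1 h0 h1 by linarith
qed

lemma poly_exp_lim:
  assumes "0 < c"
  shows "(\<lambda>N::nat. (1 + real N) ^ 3 * exp (- c * real N)) \<longlonglongrightarrow> 0"
proof -
  have f: "filterlim (\<lambda>N::nat. c * (1 + real N)) at_top sequentially"
    by (rule filterlim_tendsto_pos_mult_at_top[OF tendsto_const assms])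
       (rule filterlim_tendsto_add_at_top[OF tendsto_const filterlim_real_sequentially])
  have "(\<lambda>N. (c * (1 + real N)) ^ 3 / exp (c * (1 + real N))) \<longlonglongrightarrow> 0"
    using filterlim_compose[OF tendsto_power_div_exp_0 f] by simp
  hence "(\<lambda>N. exp c / c ^ 3 * ((c * (1 + real N)) ^ 3 / exp (c * (1 + real N)))) \<longlonglongrightarrow> 0"
    by (rule tendsto_mult_right_zero)
  moreover have "exp c / c ^ 3 * ((c * (1 + real N)) ^ 3 / exp (c * (1 + real N))) = (1 + real N) ^ 3 * exp (- c * real N)" for N
  proof -
    have "exp (c * (1 + real N)) = exp c * exp (c * real N)" by (simp add: distrib_left exp_add)
    moreover have "exp (- c * real N) = 1 / exp (c * real N)" by (simp add: exp_minus field_simps)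
    ultimately show ?thesis using assms by (simp add: power_mult_distrib)
  qed
  ultimately show ?thesis by simp
qed


locale tsetup =
  fixes p c0 b1 p0 p1 :: real
  assumes p_gt: "1/2 < p" and p_lt: "p < 1" and c0: "0 < c0" and b1: "0 < b1"
  and q1: "0 < p1" and q12: "p1 \<le> p0" and q0: "p0 < 1" and pp0: "p \<le> p0"
  and tau: "p0 - p1 = max ((sqrt (2*c0) - b1)/(dval p + 1)) 0"
  and rho: "(p*(1-p0)/(p0*(1-p))) * (p*(1-p1)/(p1*(1-p))) = 1"
  and degen: "sqrt (2*c0) - b1 \<le> 0 \<Longrightarrow> p0 = p"
begin

definition "d = dval p"
definition "\<tau> = (sqrt (2*c0) - b1) / (d + 1)"
definition "\<tau>e = max \<tau> 0"
definition "\<tau>2 = (sqrt (2*c0) + b1) / (d + 1)"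
definition "\<rho> = p*(1-p0)/(p0*(1-p))"
definition "\<rho>1 = p*(1-p1)/(p1*(1-p))"
definition "A0 = (1-p)/(1-p0)"
definition "A1 = (1-p)/(1-p1)"
definition "Cn N = (A0 * A1) ^ N * \<rho> powr (real N * \<tau>e)"
definition "ystar = d - (d+1) * p0"
definition "xstar = d - (d+1) * p1"

lemma p_pos: "0 < p" using p_gt by simp
lemma d_gt1: "1 < d" unfolding d_def dval_def using p_gt p_lt by (simp add: field_simps)
lemma d1: "d + 1 = 1 / (1 - p)" unfolding d_def dval_def using p_lt by (simp add: field_simps)
lemma p0_pos: "0 < p0" using q1 q12 by simp
lemma \<tau>e_eq: "p0 - p1 = \<tau>e" using tau unfolding \<tau>e_def \<tau>_def d_def .
lemma \<tau>e_nonneg: "0 \<le> \<tau>e" unfolding \<tau>e_def by simp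
lemma \<tau>e_lt1: "\<tau>e < 1" using \<tau>e_eq q1 q0 by simp
lemma \<tau>_le: "\<tau> \<le> \<tau>e" unfolding \<tau>e_def by simp
lemma \<tau>2_gt: "\<tau>e < \<tau>2"
proof -
  have "0 < d + 1" using d_gt1 by simp
  moreover have "0 \<le> sqrt (2*c0)" using c0 by simp
  moreover have "0 < sqrt (2 * c0) + b1" using b1 c0 by (simp add: add_nonneg_pos)
  ultimately have "0 < (sqrt (2 * c0) + b1) / (d + 1)" "(sqrt (2*c0) - b1)/(d+1) < (sqrt (2 * c0) + b1) / (d + 1)"
    using b1 by (auto intro: divide_pos_pos divide_strict_right_mono)
  thus ?thesis unfolding \<tau>e_def \<tau>_def \<tau>2_def by simp
qed
lemma \<rho>_pos: "0 < \<rho>" unfolding \<rho>_def using p_pos p_lt p0_pos q0 by simp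
lemma \<rho>1_pos: "0 < \<rho>1" unfolding \<rho>1_def using p_pos p_lt q1 q12 q0 by simp
lemma \<rho>_le1: "\<rho> \<le> 1"
proof -
  have "p * (1 - p0) \<le> p0 * (1 - p)" using pp0 by (simp add: algebra_simps)
  thus ?thesis unfolding \<rho>_def using p0_pos p_lt by simp
qed
lemma \<rho>\<rho>1: "\<rho> * \<rho>1 = 1" using rho unfolding \<rho>_def \<rho>1_def .
lemma \<rho>_U: "\<tau> \<le> 0 \<Longrightarrow> \<rho> = 1"
proof -
  assume "\<tau> \<le> 0"
  hence "sqrt (2*c0) - b1 \<le> 0" unfolding \<tau>_def using d_gt1 by (simp add: divide_le_0_iff)
  hence "p0 = p" by (rule degen)
  thus "\<rho> = 1" unfolding \<rho>_def using p_pos p_lt by simp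
qed

lemma tilt:
  assumes "k0 \<le> N" "k1 \<le> N"
  shows "W N p k0 * W N p k1 = Cn N * \<rho> powr ((real k0 - real k1) - real N * \<tau>e) * (W N p0 k0 * W N p1 k1)"
proof -
  have w0: "W N p k0 = W N p0 k0 * A0 ^ N * \<rho> ^ k0"
    unfolding A0_def \<rho>_def by (rule W_tilt) (use p_pos p_lt p0_pos q0 assms in auto)
  have w1: "W N p k1 = W N p1 k1 * A1 ^ N * \<rho>1 ^ k1"
    unfolding A1_def \<rho>1_def by (rule W_tilt) (use p_pos p_lt q1 q12 q0 assms in auto)
  have r1: "\<rho>1 = 1 / \<rho>" using \<rho>\<rho>1 \<rho>_pos by (simp add: field_simps)
  have "\<rho> ^ k0 * \<rho>1 ^ k1 = \<rho> powr (real k0 - real k1)"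
    using \<rho>_pos by (simp add: r1 powr_diff powr_realpow power_one_over divide_inverse power_inverse)
  also have "\<dots> = \<rho> powr (real N * \<tau>e) * \<rho> powr ((real k0 - real k1) - real N * \<tau>e)"
    by (simp add: powr_add[symmetric])
  finally have "\<rho> ^ k0 * \<rho>1 ^ k1 = \<rho> powr (real N * \<tau>e) * \<rho> powr ((real k0 - real k1) - real N * \<tau>e)" .
  thus ?thesis unfolding w0 w1 Cn_def by (simp add: power_mult_distrib mult_ac)
qed


lemma mm_eq: "0 < N \<Longrightarrow> mm p N k = d - (d+1) * (real k / real N)"
  unfolding mm_def d_def by (simp add: field_simps)

lemma PV_iff:
  assumes "0 < N"
  shows "PVf c0 b1 (mm p N k0) (mm p N k1) \<longleftrightarrow>
     (real k0 - real k1 \<le> - (real N * \<tau>2) \<or> real N * \<tau> \<le> real k0 - real k1)"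
proof -
  have dp: "0 < d + 1" using d_gt1 by simp
  have Np: "0 < real N" using assms by simp
  have e: "mm p N k1 - mm p N k0 = (d+1) * ((real k0 - real k1) / real N)"
    using assms by (simp add: mm_eq algebra_simps diff_divide_distrib)
  have t1: "sqrt (2*c0) - b1 = (d+1) * \<tau>" unfolding \<tau>_def using dp by simp
  have t2: "- sqrt (2*c0) - b1 = (d+1) * (- \<tau>2)" unfolding \<tau>2_def using dp by simp
  have i1a: "(d+1) * (- \<tau>2) < (d+1) * ((real k0 - real k1) / real N) \<longleftrightarrow> - \<tau>2 < (real k0 - real k1) / real N"
    using dp by (rule mult_less_cancel_left_pos)
  have i1b: "- \<tau>2 < (real k0 - real k1) / real N \<longleftrightarrow> - \<tau>2 * real N < real k0 - real k1"
    using Np by (rule pos_less_divide_eq)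
  have i2a: "(d+1) * ((real k0 - real k1) / real N) < (d+1) * \<tau> \<longleftrightarrow> (real k0 - real k1) / real N < \<tau>"
    using dp by (rule mult_less_cancel_left_pos)
  have i2b: "(real k0 - real k1) / real N < \<tau> \<longleftrightarrow> real k0 - real k1 < \<tau> * real N"
    using Np by (rule pos_divide_less_eq)
  have i1: "(d+1) * (- \<tau>2) < (d+1) * ((real k0 - real k1) / real N) \<longleftrightarrow> - (real N * \<tau>2) < real k0 - real k1"
    unfolding i1a i1b by (simp add: mult.commute)
  have i2: "(d+1) * ((real k0 - real k1) / real N) < (d+1) * \<tau> \<longleftrightarrow> real k0 - real k1 < real N * \<tau>"
    unfolding i2a i2b by (simp add: mult.commute)
  show ?thesis unfolding PVf_def e t1 t2 i1 i2 by linarith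
qed

lemma mm_range: "0 < N \<Longrightarrow> k \<le> N \<Longrightarrow> -1 \<le> mm p N k \<and> mm p N k \<le> d"
proof -
  assume N: "0 < N" "k \<le> N"
  have "0 \<le> real k / real N" "real k / real N \<le> 1" using N by auto
  moreover have "0 < d + 1" using d_gt1 by simp
  ultimately have "0 \<le> (d+1) * (real k / real N)" "(d+1) * (real k / real N) \<le> (d + 1) * 1"
    using mult_nonneg_nonneg[of "d+1" "real k / real N"] mult_left_mono[of "real k / real N" 1 "d+1"] by auto
  hence "0 \<le> (d+1) * (real k / real N)" "(d+1) * (real k / real N) \<le> d + 1" by (simp_all only: mult_1_right)
  thus ?thesis unfolding mm_eq[OF N(1)] by linarith
qed

lemma star_range: "-1 \<le> ystar" "ystar \<le> d" "-1 \<le> xstar" "xstar \<le> d"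
proof -
  have dp: "0 < d + 1" using d_gt1 by simp
  have "(d+1) * p0 \<le> d + 1" "0 \<le> (d+1) * p0" "(d+1) * p1 \<le> d + 1" "0 \<le> (d+1) * p1"
    using dp q0 q1 q12 by (auto simp: mult_left_le_one_le)
  thus "-1 \<le> ystar" "ystar \<le> d" "-1 \<le> xstar" "xstar \<le> d" unfolding ystar_def xstar_def by auto
qed

lemma mm_dist0: "0 < N \<Longrightarrow> \<bar>mm p N k - ystar\<bar> = (d+1) * \<bar>real k / real N - p0\<bar>"
proof -
  assume N: "0 < N"
  have "mm p N k - ystar = - ((d+1) * (real k / real N - p0))" unfolding mm_eq[OF N] ystar_def by (simp add: algebra_simps)
  thus ?thesis using d_gt1 by (simp add: abs_mult)
qed

lemma mm_dist1: "0 < N \<Longrightarrow> \<bar>mm p N k - xstar\<bar> = (d+1) * \<bar>real k / real N - p1\<bar>"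
proof -
  assume N: "0 < N"
  have "mm p N k - xstar = - ((d+1) * (real k / real N - p1))" unfolding mm_eq[OF N] xstar_def by (simp add: algebra_simps)
  thus ?thesis using d_gt1 by (simp add: abs_mult)
qed

definition "Lc = (4*d + 2*b1) * (d+1)"

lemma gain_close:
  assumes N: "0 < N" "k0 \<le> N" "k1 \<le> N" and "\<bar>real k0 / real N - p0\<bar> \<le> \<delta>" "\<bar>real k1 / real N - p1\<bar> \<le> \<delta>"
  shows "\<bar>gv b1 (mm p N k0) (mm p N k1) - gv b1 ystar xstar\<bar> \<le> Lc * \<delta>"
proof -
  have dp: "0 < d + 1" using d_gt1 by simp
  have "\<bar>gv b1 (mm p N k0) (mm p N k1) - gv b1 ystar xstar\<bar> \<le> (2*d + 2*b1) * \<bar>mm p N k0 - ystar\<bar> + 2*d * \<bar>mm p N k1 - xstar\<bar>"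
    by (rule gain_lip) (use d_gt1 b1 mm_range[OF N(1) N(2)] mm_range[OF N(1) N(3)] star_range in auto)
  also have "\<dots> = (2*d + 2*b1) * ((d+1) * \<bar>real k0 / real N - p0\<bar>) + 2*d * ((d+1) * \<bar>real k1 / real N - p1\<bar>)"
    using mm_dist0[OF N(1)] mm_dist1[OF N(1)] by simp
  also have "\<dots> \<le> (2*d + 2*b1) * ((d+1) * \<delta>) + 2*d * ((d+1) * \<delta>)"
    using assms(4,5) dp d_gt1 b1 by (intro add_mono mult_left_mono) auto
  also have "\<dots> = Lc * \<delta>" unfolding Lc_def by (simp add: algebra_simps)
  finally show ?thesis .
qed

lemma frac_close: "0 < N \<Longrightarrow> k \<le> N \<Longrightarrow> 0 \<le> r \<Longrightarrow> r \<le> 1 \<Longrightarrow> \<bar>real k / real N - r\<bar> \<le> 1"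
proof -
  assume a: "0 < N" "k \<le> N" "0 \<le> r" "r \<le> 1"
  hence "real k / real N \<le> 1" "0 \<le> real k / real N" by simp_all
  thus ?thesis using a unfolding abs_le_iff by linarith
qed


definition "T (N::nat) = {..N} \<times> {..N}"
definition "Aset N = {x\<in>T N. PVf c0 b1 (mm p N (fst x)) (mm p N (snd x))}"
definition "ww N x = W N p (fst x) * W N p (snd x)"
definition "wt N x = W N p0 (fst x) * W N p1 (snd x)"
definition "Jf x = real (fst x) - real (snd x)"
definition "farS N \<delta> = {x. \<delta> \<le> \<bar>real (fst x) / real N - p0\<bar> \<or> \<delta> \<le> \<bar>real (snd x) / real N - p1\<bar>}"

lemma ww_nonneg: "0 \<le> ww N x" unfolding ww_def using p_pos p_lt by (intro mult_nonneg_nonneg W_nonneg) auto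
lemma wt_nonneg: "0 \<le> wt N x" unfolding wt_def using p0_pos q0 q1 q12 by (intro mult_nonneg_nonneg W_nonneg) auto
lemma fin_T: "finite (T N)" unfolding T_def by simp
lemma Cn_pos: "0 < Cn N"
  unfolding Cn_def A0_def A1_def using p_lt q0 q12 \<rho>_pos by simp

lemma tilt': "x \<in> T N \<Longrightarrow> ww N x = Cn N * \<rho> powr (Jf x - real N * \<tau>e) * wt N x"
  unfolding ww_def wt_def Jf_def T_def by (cases x) (auto intro: tilt)

lemma Aset_split: "0 < N \<Longrightarrow> Aset N = {x\<in>T N. real N * \<tau> \<le> Jf x} \<union> {x\<in>T N. Jf x \<le> - (real N * \<tau>2)}"
  unfolding Aset_def Jf_def using PV_iff by auto

lemma upper:
  assumes N: "0 < N" and \<delta>: "0 \<le> \<delta>" "2 * \<delta> \<le> \<tau>2 - \<tau>e"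
  shows "sum (ww N) (Aset N \<inter> farS N \<delta>) \<le> 8 * Cn N * exp (- 2 * real N * \<delta>\<^sup>2)"
proof -
  define U where "U = {x\<in>T N. real N * \<tau> \<le> Jf x}"
  define Lo where "Lo = {x\<in>T N. Jf x \<le> - (real N * \<tau>2)}"
  have finU: "finite U" "finite Lo" unfolding U_def Lo_def by (rule finite_subset[OF _ fin_T], blast)+
  have sub: "Aset N \<inter> farS N \<delta> \<subseteq> (U \<inter> farS N \<delta>) \<union> Lo"
    using Aset_split[OF N] unfolding U_def Lo_def by auto
  have "sum (ww N) (Aset N \<inter> farS N \<delta>) \<le> sum (ww N) ((U \<inter> farS N \<delta>) \<union> Lo)"
    by (rule sum_mono2) (use finU sub ww_nonneg in auto)
  also have "\<dots> = sum (ww N) (U \<inter> farS N \<delta>) + sum (ww N) Lo - sum (ww N) ((U \<inter> farS N \<delta>) \<inter> Lo)"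
    using finU by (intro sum_Un) auto
  also have "\<dots> \<le> sum (ww N) (U \<inter> farS N \<delta>) + sum (ww N) Lo"
    using sum_nonneg[of "(U \<inter> farS N \<delta>) \<inter> Lo" "ww N"] ww_nonneg by auto
  finally have s1: "sum (ww N) (Aset N \<inter> farS N \<delta>) \<le> sum (ww N) (U \<inter> farS N \<delta>) + sum (ww N) Lo" .
  have swapLo: "prod.swap ` Lo \<subseteq> U \<inter> farS N \<delta>"
  proof
    fix y assume "y \<in> prod.swap ` Lo"
    then obtain k0 k1 where y: "y = (k1, k0)" and x: "(k0, k1) \<in> Lo" by auto
    have k: "k0 \<le> N" "k1 \<le> N" and J: "real k0 - real k1 \<le> - (real N * \<tau>2)"
      using x unfolding Lo_def T_def Jf_def by auto
    have J': "real N * \<tau>2 \<le> real k1 - real k0" using J by simp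
    have "real N * \<tau> \<le> real N * \<tau>2"
      using \<tau>_le \<tau>2_gt by (intro mult_left_mono) auto
    hence inU: "y \<in> U" unfolding U_def T_def Jf_def y using k J' by auto
    have "y \<in> farS N \<delta>"
    proof (rule ccontr)
      assume "y \<notin> farS N \<delta>"
      hence c: "\<bar>real k1 / real N - p0\<bar> < \<delta>" "\<bar>real k0 / real N - p1\<bar> < \<delta>"
        unfolding farS_def y by auto
      have "(real k1 - real k0) / real N = (real k1 / real N - p0) - (real k0 / real N - p1) + (p0 - p1)"
        by (simp add: diff_divide_distrib)
      also have "\<dots> < \<delta> + \<delta> + \<tau>e" using c \<tau>e_eq by (simp add: abs_less_iff)
      also have "\<dots> \<le> \<tau>2" using \<delta> by simp
      finally have "(real k1 - real k0) < \<tau>2 * real N" using N by (simp add: pos_divide_less_eq)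
      thus False using J' by (simp add: mult.commute)
    qed
    thus "y \<in> U \<inter> farS N \<delta>" using inU by simp
  qed
  have "sum (ww N) Lo = sum (ww N) (prod.swap ` Lo)"
  proof -
    have "sum (ww N) (prod.swap ` Lo) = sum (ww N \<circ> prod.swap) Lo"
      by (rule sum.reindex) simp
    also have "\<dots> = sum (ww N) Lo" unfolding ww_def by (simp add: o_def mult.commute)
    finally show ?thesis by simp
  qed
  also have "\<dots> \<le> sum (ww N) (U \<inter> farS N \<delta>)"
    by (rule sum_mono2) (use finU swapLo ww_nonneg in auto)
  finally have s2: "sum (ww N) Lo \<le> sum (ww N) (U \<inter> farS N \<delta>)" .
  have "sum (ww N) (U \<inter> farS N \<delta>) \<le> sum (\<lambda>x. Cn N * wt N x) (U \<inter> farS N \<delta>)"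
  proof (rule sum_mono)
    fix x assume x: "x \<in> U \<inter> farS N \<delta>"
    hence xT: "x \<in> T N" and xJ: "real N * \<tau> \<le> Jf x" unfolding U_def by auto
    have "\<rho> powr (Jf x - real N * \<tau>e) \<le> 1"
    proof (cases "\<tau> \<le> 0")
      case True thus ?thesis using \<rho>_U by simp
    next
      case False
      hence "\<tau>e = \<tau>" unfolding \<tau>e_def by simp
      hence "0 \<le> Jf x - real N * \<tau>e" using xJ by simp
      hence "\<rho> powr (Jf x - real N * \<tau>e) \<le> \<rho> powr 0"
        using \<rho>_pos \<rho>_le1 by (intro powr_mono') auto
      thus ?thesis using \<rho>_pos by simp
    qed
    hence "Cn N * \<rho> powr (Jf x - real N * \<tau>e) * wt N x \<le> Cn N * 1 * wt N x"
      using Cn_pos wt_nonneg by (intro mult_right_mono mult_left_mono) (auto intro: less_imp_le)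
    thus "ww N x \<le> Cn N * wt N x" using tilt'[OF xT] by simp
  qed
  also have "\<dots> = Cn N * sum (wt N) (U \<inter> farS N \<delta>)" by (simp add: sum_distrib_left)
  also have "sum (wt N) (U \<inter> farS N \<delta>) \<le> sum (wt N) (T N \<inter> farS N \<delta>)"
    by (rule sum_mono2) (use fin_T wt_nonneg in \<open>auto simp: U_def\<close>)
  also have "T N \<inter> farS N \<delta> = {x\<in>{..N}\<times>{..N}. \<delta> \<le> \<bar>real (fst x) / real N - p0\<bar> \<or> \<delta> \<le> \<bar>real (snd x) / real N - p1\<bar>}"
    unfolding T_def farS_def by auto
  also have "sum (wt N) \<dots> \<le> 4 * exp (- 2 * real N * \<delta>\<^sup>2)"
    unfolding wt_def by (rule far_sum) (use p0_pos q0 q1 q12 N \<delta> in auto)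
  finally have s3: "sum (ww N) (U \<inter> farS N \<delta>) \<le> Cn N * (4 * exp (- 2 * real N * \<delta>\<^sup>2))"
    using Cn_pos by (simp add: mult_left_mono)
  show ?thesis using s1 s2 s3 by simp
qed


lemma W_succ_lower:
  assumes "0 < r" "r < 1" "k < N"
  shows "W N r k * (r / (real N * (1 - r))) \<le> W N r (Suc k)"
proof -
  have Wp: "0 \<le> W N r (Suc k)" "0 \<le> W N r k" using assms by (auto intro: W_nonneg)
  have "W N r k * r \<le> W N r k * (real (N - k) * r)"
    using Wp assms by (intro mult_left_mono) auto
  also have "\<dots> = W N r (Suc k) * (real (Suc k) * (1 - r))" using W_ratio[OF assms(3)] by simp
  also have "\<dots> \<le> W N r (Suc k) * (real N * (1 - r))"
    using Wp assms by (intro mult_left_mono mult_right_mono) auto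
  finally have "W N r k * r \<le> W N r (Suc k) * (real N * (1 - r))" .
  moreover have "0 < real N * (1 - r)" using assms by simp
  ultimately show ?thesis by (simp add: field_simps)
qed

lemma lower:
  assumes N: "0 < N" "real (N+1) * p0 < real N"
  shows "Cn N * (\<rho>^3 * ((1 / real (N+1)) * (p0 / (real N * (1 - p0))) * (1 / real (N+1)))) \<le> sum (ww N) (Aset N)"
proof -
  obtain k0 where k0: "k0 \<le> N" "1 / real (N + 1) \<le> W N p0 k0" "real (N + 1) * p0 - 1 \<le> real k0" "real k0 \<le> real (N + 1) * p0"
    using mode_exists[of p0 N] p0_pos q0 by auto
  obtain k1 where k1: "k1 \<le> N" "1 / real (N + 1) \<le> W N p1 k1" "real (N + 1) * p1 - 1 \<le> real k1" "real k1 \<le> real (N + 1) * p1"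
    using mode_exists[of p1 N] q1 q12 q0 by auto
  have k0N: "k0 < N" using k0(4) N(2) by simp
  define pt where "pt = (Suc k0, k1)"
  have ptT: "pt \<in> T N" unfolding pt_def T_def using k0N k1 by auto
  have Jpt: "Jf pt = real k0 + 1 - real k1" unfolding pt_def Jf_def by simp
  have J1: "real N * \<tau>e \<le> Jf pt"
  proof -
    have "real (N+1) * \<tau>e = real (N + 1) * p0 - 1 + 1 - real (N + 1) * p1" using \<tau>e_eq by (simp add: algebra_simps)
    also have "\<dots> \<le> Jf pt" unfolding Jpt using k0(3) k1(4) by linarith
    finally have "real (N+1) * \<tau>e \<le> Jf pt" .
    moreover have "real N * \<tau>e \<le> real (N+1) * \<tau>e" using \<tau>e_nonneg by (intro mult_right_mono) auto
    ultimately show ?thesis by linarith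
  qed
  have J2: "Jf pt - real N * \<tau>e \<le> 3"
  proof -
    have "Jf pt \<le> real (N + 1) * p0 + 1 - (real (N + 1) * p1 - 1)" unfolding Jpt using k0(4) k1(3) by linarith
    also have "\<dots> = real N * \<tau>e + \<tau>e + 2" using \<tau>e_eq by (simp add: algebra_simps)
    finally show ?thesis using \<tau>e_lt1 by linarith
  qed
  have "real N * \<tau> \<le> real N * \<tau>e" using \<tau>_le by (intro mult_left_mono) auto
  hence ptA: "pt \<in> Aset N" using Aset_split[OF N(1)] ptT J1 by auto
  have r3: "\<rho>^3 \<le> \<rho> powr (Jf pt - real N * \<tau>e)"
  proof -
    have "\<rho> powr 3 \<le> \<rho> powr (Jf pt - real N * \<tau>e)" using J2 \<rho>_pos \<rho>_le1 by (intro powr_mono') auto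
    moreover have "\<rho> powr 3 = \<rho> ^ 3" using \<rho>_pos by (simp add: powr_realpow)
    ultimately show ?thesis by simp
  qed
  have w0: "(1 / real (N+1)) * (p0 / (real N * (1 - p0))) \<le> W N p0 (Suc k0)"
  proof -
    have "(1 / real (N+1)) * (p0 / (real N * (1 - p0))) \<le> W N p0 k0 * (p0 / (real N * (1 - p0)))"
      using k0(2) p0_pos q0 N by (intro mult_right_mono) auto
    also have "\<dots> \<le> W N p0 (Suc k0)" by (rule W_succ_lower) (use p0_pos q0 k0N in auto)
    finally show ?thesis .
  qed
  have wtp: "(1 / real (N+1)) * (p0 / (real N * (1 - p0))) * (1 / real (N+1)) \<le> wt N pt"
    unfolding wt_def pt_def using w0 k1(2) p0_pos q0 N
    by (intro mult_mono) (auto intro: W_nonneg less_imp_le)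
  have "Cn N * (\<rho>^3 * ((1 / real (N+1)) * (p0 / (real N * (1 - p0))) * (1 / real (N+1))))
      \<le> Cn N * (\<rho> powr (Jf pt - real N * \<tau>e) * wt N pt)"
    using Cn_pos r3 wtp \<rho>_pos p0_pos q0
    by (intro mult_left_mono mult_mono) (auto intro: less_imp_le)
  also have "\<dots> = ww N pt" using tilt'[OF ptT] by simp
  also have "\<dots> \<le> sum (ww N) (Aset N)"
    by (rule member_le_sum) (use ptA ww_nonneg fin_T in \<open>auto simp: Aset_def\<close>)
  finally show ?thesis .
qed


lemma Lc_pos: "0 < Lc" unfolding Lc_def using d_gt1 b1 by simp

lemma G_eq: "0 < N \<Longrightarrow> G p c0 b1 N = sum (\<lambda>x. ww N x * gv b1 (mm p N (fst x)) (mm p N (snd x))) (Aset N) / sum (ww N) (Aset N)"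
  unfolding G_sums[OF less_imp_le[OF p_pos] less_imp_le[OF p_lt]] Aset_def T_def ww_def by simp

lemma ratio_bound:
  assumes N: "0 < N" "real (N+1) * p0 < real N" and \<delta>: "0 \<le> \<delta>" "2 * \<delta> \<le> \<tau>2 - \<tau>e"
  shows "sum (ww N) (Aset N \<inter> farS N \<delta>) / sum (ww N) (Aset N)
     \<le> (8 * (1 - p0) / (\<rho>^3 * p0)) * ((1 + real N) ^ 3 * exp (- (2 * \<delta>\<^sup>2) * real N))"
proof -
  define E where "E = exp (- 2 * real N * \<delta>\<^sup>2)"
  define L where "L = \<rho>^3 * ((1 / real (N+1)) * (p0 / (real N * (1 - p0))) * (1 / real (N+1)))"
  define L' where "L' = \<rho>^3 * p0 / ((1 - p0) * (1 + real N) ^ 3)"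
  have Lpos: "0 < L'" unfolding L'_def using \<rho>_pos p0_pos q0 by simp
  have LL: "L' \<le> L"
  proof -
    have "L = \<rho>^3 * p0 / ((1 - p0) * (real N * (1 + real N)^2))"
      unfolding L_def by (simp add: power2_eq_square field_simps)
    moreover have "(1 - p0) * (real N * (1 + real N)^2) \<le> (1 - p0) * (1 + real N) ^ 3"
      using q0 by (intro mult_left_mono) (auto simp: power2_eq_square power3_eq_cube)
    moreover have "0 < (1 - p0) * (real N * (1 + real N)^2)" using q0 N by simp
    moreover have "0 \<le> \<rho>^3 * p0" using \<rho>_pos p0_pos by simp
    ultimately show ?thesis unfolding L'_def by (simp add: divide_left_mono)
  qed
  have low: "Cn N * L' \<le> sum (ww N) (Aset N)"
    using lower[OF N] LL Cn_pos unfolding L_def[symmetric] by (meson less_imp_le mult_left_mono order_trans)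
  have up: "sum (ww N) (Aset N \<inter> farS N \<delta>) \<le> 8 * Cn N * E" unfolding E_def by (rule upper[OF N(1) \<delta>])
  have "sum (ww N) (Aset N \<inter> farS N \<delta>) / sum (ww N) (Aset N) \<le> (8 * Cn N * E) / (Cn N * L')"
    by (rule frac_le) (use up low Cn_pos[of N] Lpos sum_nonneg[of _ "ww N"] ww_nonneg in \<open>auto simp: E_def intro: less_imp_le\<close>)
  also have "\<dots> = 8 * E / L'" using Cn_pos[of N] by simp
  also have "\<dots> = (8 * (1 - p0) / (\<rho>^3 * p0)) * ((1 + real N) ^ 3 * E)"
    unfolding L'_def using \<rho>_pos p0_pos q0 by (simp add: field_simps)
  finally show ?thesis unfolding E_def by (simp add: mult_ac)
qed

theorem conv: "G p c0 b1 \<longlonglongrightarrow> gv b1 ystar xstar"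
proof (rule LIMSEQ_I)
  fix \<epsilon> :: real assume \<epsilon>: "0 < \<epsilon>"
  define K where "K = 8 * (1 - p0) / (\<rho>^3 * p0)"
  have Kpos: "0 < K" unfolding K_def using q0 p0_pos \<rho>_pos by simp
  define \<delta> where "\<delta> = min ((\<tau>2 - \<tau>e)/2) (\<epsilon> / (2 * Lc))"
  have \<delta>pos: "0 < \<delta>" unfolding \<delta>_def using \<tau>2_gt \<epsilon> Lc_pos by simp
  have \<delta>2: "2 * \<delta> \<le> \<tau>2 - \<tau>e"
  proof -
    have "\<delta> \<le> (\<tau>2 - \<tau>e) / 2" unfolding \<delta>_def by (rule min.cobounded1)
    hence "2 * \<delta> \<le> 2 * ((\<tau>2 - \<tau>e) / 2)" by (rule mult_left_mono) simp
    thus ?thesis by simp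
  qed
  have \<delta>L: "Lc * \<delta> \<le> \<epsilon> / 2"
  proof -
    have "\<delta> \<le> \<epsilon> / (2 * Lc)" unfolding \<delta>_def by (rule min.cobounded2)
    hence "Lc * \<delta> \<le> Lc * (\<epsilon> / (2 * Lc))" using Lc_pos by (intro mult_left_mono) auto
    thus ?thesis using Lc_pos by simp
  qed
  have "(\<lambda>N::nat. (1 + real N) ^ 3 * exp (- (2 * \<delta>\<^sup>2) * real N)) \<longlonglongrightarrow> 0"
    by (rule poly_exp_lim) (use \<delta>pos in simp)
  moreover have "0 < \<epsilon> / (2 * Lc * K)" using \<epsilon> Lc_pos Kpos by simp
  ultimately obtain M1 where M1: "\<And>N. N \<ge> M1 \<Longrightarrow> norm ((1 + real N) ^ 3 * exp (- (2 * \<delta>\<^sup>2) * real N) - 0) < \<epsilon> / (2 * Lc * K)"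
    using LIMSEQ_D by blast
  obtain M2 :: nat where M2: "p0 / (1 - p0) < real M2" using reals_Archimedean2 by blast
  show "\<exists>no. \<forall>N\<ge>no. norm (G p c0 b1 N - gv b1 ystar xstar) < \<epsilon>"
  proof (intro exI allI impI)
    fix N assume NM: "max (max M1 M2) 1 \<le> N"
    have N0: "0 < N" using NM by simp
    have Np0: "real (N+1) * p0 < real N"
    proof -
      have "p0 / (1 - p0) < real N" using M2 NM by linarith
      hence "p0 < real N * (1 - p0)" using q0 by (simp add: pos_divide_less_eq)
      thus ?thesis by (simp add: algebra_simps)
    qed
    have Spos: "0 < sum (ww N) (Aset N)"
    proof -
      have "0 < Cn N * (\<rho>^3 * ((1 / real (N+1)) * (p0 / (real N * (1 - p0))) * (1 / real (N+1))))"
        using Cn_pos[of N] \<rho>_pos p0_pos q0 N0 by simp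
      thus ?thesis using lower[OF N0 Np0] by linarith
    qed
    have finA: "finite (Aset N)" unfolding Aset_def using fin_T by simp
    have cb: "\<bar>sum (\<lambda>x. ww N x * gv b1 (mm p N (fst x)) (mm p N (snd x))) (Aset N) / sum (ww N) (Aset N) - gv b1 ystar xstar\<bar>
       \<le> Lc * \<delta> + Lc * sum (ww N) (Aset N \<inter> farS N \<delta>) / sum (ww N) (Aset N)"
    proof (rule conc_bound[OF finA _ Spos])
      show "0 \<le> ww N x" for x by (rule ww_nonneg)
      show "0 \<le> Lc * \<delta>" using Lc_pos \<delta>pos by simp
    next
      fix x assume x: "x \<in> Aset N" "x \<notin> farS N \<delta>"
      hence "fst x \<le> N" "snd x \<le> N" unfolding Aset_def T_def by auto
      moreover have "\<bar>real (fst x) / real N - p0\<bar> \<le> \<delta>" "\<bar>real (snd x) / real N - p1\<bar> \<le> \<delta>"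
        using x(2) unfolding farS_def by auto
      ultimately show "\<bar>gv b1 (mm p N (fst x)) (mm p N (snd x)) - gv b1 ystar xstar\<bar> \<le> Lc * \<delta>"
        by (intro gain_close N0)
    next
      fix x assume x: "x \<in> Aset N"
      hence k: "fst x \<le> N" "snd x \<le> N" unfolding Aset_def T_def by auto
      moreover have "\<bar>real (fst x) / real N - p0\<bar> \<le> 1" "\<bar>real (snd x) / real N - p1\<bar> \<le> 1"
        using k N0 p0_pos q0 q1 q12 by (auto intro!: frac_close)
      ultimately have "\<bar>gv b1 (mm p N (fst x)) (mm p N (snd x)) - gv b1 ystar xstar\<bar> \<le> Lc * 1"
        by (intro gain_close N0)
      thus "\<bar>gv b1 (mm p N (fst x)) (mm p N (snd x)) - gv b1 ystar xstar\<bar> \<le> Lc" by simp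
    qed
    have rb: "sum (ww N) (Aset N \<inter> farS N \<delta>) / sum (ww N) (Aset N) \<le> K * ((1 + real N) ^ 3 * exp (- (2 * \<delta>\<^sup>2) * real N))"
      unfolding K_def by (rule ratio_bound[OF N0 Np0]) (use \<delta>pos \<delta>2 in auto)
    have X: "(1 + real N) ^ 3 * exp (- (2 * \<delta>\<^sup>2) * real N) < \<epsilon> / (2 * Lc * K)"
      using M1[of N] NM by simp
    have "Lc * sum (ww N) (Aset N \<inter> farS N \<delta>) / sum (ww N) (Aset N) = Lc * (sum (ww N) (Aset N \<inter> farS N \<delta>) / sum (ww N) (Aset N))"
      by simp
    also have "\<dots> \<le> Lc * (K * ((1 + real N) ^ 3 * exp (- (2 * \<delta>\<^sup>2) * real N)))"
      using rb Lc_pos by (intro mult_left_mono) auto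
    also have "\<dots> < Lc * (K * (\<epsilon> / (2 * Lc * K)))"
      using X Lc_pos Kpos by (intro mult_strict_left_mono) auto
    also have "\<dots> = \<epsilon> / 2" using Lc_pos Kpos by simp
    finally have "Lc * sum (ww N) (Aset N \<inter> farS N \<delta>) / sum (ww N) (Aset N) < \<epsilon> / 2" .
    thus "norm (G p c0 b1 N - gv b1 ystar xstar) < \<epsilon>"
      using cb \<delta>L unfolding G_eq[OF N0] real_norm_def by linarith
  qed
qed


end


lemma sign_lemma:
  fixes d s b1 x y :: real
  assumes d: "1 < d" and s: "0 < s" and b1: "0 < b1" and xy: "x - y = s - b1"
    and x1: "-1 \<le> x" and y1: "-1 \<le> y" and opt: "(d-1)*x*y + d*(x+y) = 0"
  shows "0 < gv b1 y x \<longleftrightarrow> b1 < (s\<^sup>2/2) / (s + 2*d/(d-1))"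
proof -
  define S where "S = x + y"
  have xe: "x = y + s - b1" using xy by simp
  have g: "gv b1 y x = s * (S - b1)" unfolding gv_def S_def xe by (simp add: power2_eq_square algebra_simps)
  have i1: "0 < gv b1 y x \<longleftrightarrow> b1 < S" unfolding g using s by (simp add: zero_less_mult_iff)
  have xyv: "x * y = (S\<^sup>2 - (s - b1)\<^sup>2) / 4" unfolding S_def xy[symmetric] by (simp add: power2_eq_square algebra_simps)
  have hS: "(d-1) * ((S\<^sup>2 - (s - b1)\<^sup>2) / 4) + d * S = 0"
  proof -
    have "(d-1) * ((S\<^sup>2 - (s - b1)\<^sup>2) / 4) + d * S = (d-1)*(x*y) + d*S"
      by (simp only: xyv)
    also have "\<dots> = (d-1)*x*y + d*(x+y)" unfolding S_def by (simp add: mult.assoc)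
    finally show ?thesis using opt by simp
  qed
  define h where "h = (d-1) * ((b1\<^sup>2 - (s - b1)\<^sup>2) / 4) + d * b1"
  define P where "P = (d-1) * (S + b1) / 4 + d"
  have ident: "((d-1) * ((S\<^sup>2 - (s - b1)\<^sup>2) / 4) + d * S) - h = (S - b1) * P"
    unfolding h_def P_def by (simp add: power2_eq_square field_simps)
  hence mh: "- h = (S - b1) * P" using hS by simp
  have Ppos: "0 < P"
  proof -
    have "-2 < S + b1" unfolding S_def using x1 y1 b1 by simp
    hence "(d-1) * (-2) \<le> (d-1) * (S + b1)" using d by (intro mult_left_mono) auto
    hence "(d-1) * (-2) / 4 \<le> (d-1) * (S + b1) / 4" by (simp add: divide_right_mono)
    moreover have "(d-1) * (-2) / 4 + d = (d + 1) / 2" by (simp add: field_simps)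
    moreover have "0 < (d + 1) / 2" using d by simp
    ultimately show ?thesis unfolding P_def by linarith
  qed
  have i2: "b1 < S \<longleftrightarrow> h < 0"
  proof -
    have "b1 < S \<longleftrightarrow> 0 < (S - b1) * P" using Ppos by (simp add: zero_less_mult_iff)
    thus ?thesis using mh by linarith
  qed
  define Q where "Q = (d - 1) * s + 2 * d"
  have Qpos: "0 < Q"
  proof -
    have "0 < (d - 1) * s" using d s by simp
    thus ?thesis unfolding Q_def using d by linarith
  qed
  have hq: "h = (2 * b1 * Q - (d-1) * s\<^sup>2) / 4" unfolding h_def Q_def by (simp add: power2_eq_square field_simps)
  have i3: "h < 0 \<longleftrightarrow> b1 * Q < (d-1) * (s\<^sup>2/2)" unfolding hq by (simp add: algebra_simps)
  have den: "s + 2*d/(d-1) = Q / (d-1)" unfolding Q_def using d by (simp add: field_simps)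
  have dpos: "0 < d - 1" using d by simp
  have "b1 < (s\<^sup>2/2) / (s + 2*d/(d-1)) \<longleftrightarrow> b1 * (Q / (d-1)) < s\<^sup>2/2"
    unfolding den by (rule pos_less_divide_eq) (use Qpos dpos in simp)
  also have "\<dots> \<longleftrightarrow> b1 * Q < (d-1) * (s\<^sup>2/2)"
  proof -
    have "b1 * (Q / (d-1)) = (b1 * Q) / (d-1)" by simp
    thus ?thesis using dpos by (simp add: pos_divide_less_eq mult.commute)
  qed
  finally show ?thesis using i1 i2 i3 by simp
qed



lemma opt_ident:
  fixes d u t :: real
  shows "(d-1)*(d - (d+1)*(u-t))*(d - (d+1)*u) + d*((d - (d+1)*(u-t)) + (d - (d+1)*u))
       = -(d+1)*(u*(u-t) - d\<^sup>2*((1-u)*(1-u+t)))"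
  by algebra

theorem proposition3:
  fixes p c0 beta0 beta1 :: real
  assumes "1/2 < p" and "p < 1"
    and "0 < c0" and "0 < beta1"
    and "-1 < (- sqrt (2 * c0) - beta1) / (dval p + 1)"
    and "(- sqrt (2 * c0) - beta1) / (dval p + 1) < (sqrt (2 * c0) - beta1) / (dval p + 1)"
    and "(sqrt (2 * c0) - beta1) / (dval p + 1) < 1"
  shows "\<exists>L. (G p c0 beta1 \<longlonglongrightarrow> L) \<and>
           (0 < L \<longleftrightarrow> beta1 < c0 / (sqrt (2 * c0) + 2 * dval p / (dval p - 1)))"
proof -
  note p_gt = assms(1) and p_lt = assms(2) and c0 = assms(3) and b1 = assms(4)
  define d where "d = dval p"
  define s where "s = sqrt (2 * c0)"
  have d1: "1 < d" unfolding d_def dval_def using p_gt p_lt by (simp add: field_simps)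
  have dp: "d * (1 - p) = p" unfolding d_def dval_def using p_lt by simp
  have s: "0 < s" unfolding s_def using c0 by simp
  have s2: "s\<^sup>2 = 2 * c0" unfolding s_def using c0 by simp
  have c0s: "c0 = s\<^sup>2 / 2" using s2 by simp
  show ?thesis
  proof (cases "s - beta1 \<le> 0")
    case True
    have tle: "(sqrt (2*c0) - beta1)/(dval p + 1) \<le> 0"
      using True d1 unfolding s_def d_def by (simp add: divide_le_0_iff)
    interpret T: tsetup p c0 beta1 p p
    proof
      show "p - p = max ((sqrt (2*c0) - beta1)/(dval p + 1)) 0" using tle by simp
      show "p * (1 - p) / (p * (1 - p)) * (p * (1 - p) / (p * (1 - p))) = 1" using p_gt p_lt by simp
    qed (use p_gt p_lt c0 b1 in auto)
    have ys: "T.ystar = 0" "T.xstar = 0" unfolding T.ystar_def T.xstar_def T.d_def d_def[symmetric]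
      using dp by (simp_all add: algebra_simps)
    have L: "gv beta1 T.ystar T.xstar = - beta1\<^sup>2" unfolding ys gv_def by simp
    have X: "0 < 2 * d / (d - 1)" using d1 by simp
    have "0 < (s + 2 * d / (d - 1)) * s" using X s by (intro mult_pos_pos add_pos_pos)
    hence "c0 / (s + 2 * d / (d - 1)) \<le> c0 / s"
      using X c0 by (intro divide_left_mono) auto
    also have "c0 / s = s / 2" using s unfolding c0s by (simp add: power2_eq_square)
    also have "\<dots> < beta1" using True s by simp
    finally have "\<not> beta1 < c0 / (s + 2 * d / (d - 1))" by simp
    thus ?thesis using T.conv L b1 unfolding s_def d_def by (intro exI[of _ "- beta1\<^sup>2"]) simp
  next
    case False
    define \<tau> where "\<tau> = (s - beta1) / (d + 1)"
    have \<tau>0: "0 < \<tau>" unfolding \<tau>_def using False d1 by simp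
    have \<tau>1: "\<tau> < 1" unfolding \<tau>_def s_def d_def using assms(7) .
    define F where "F = (\<lambda>u::real. u * (u - \<tau>) - d\<^sup>2 * ((1 - u) * (1 - u + \<tau>)))"
    have Ft: "F \<tau> < 0" unfolding F_def using \<tau>1 d1 by simp
    have F1: "0 < F 1" unfolding F_def using \<tau>1 by simp
    have "\<exists>u. \<tau> \<le> u \<and> u \<le> 1 \<and> F u = 0"
      by (rule IVT') (use Ft F1 \<tau>1 in \<open>auto simp: F_def intro!: continuous_intros\<close>)
    then obtain u where u: "\<tau> \<le> u" "u \<le> 1" "F u = 0" by blast
    have ut: "\<tau> < u" using u Ft by (cases "u = \<tau>") auto
    have u1: "u < 1" using u F1 by (cases "u = 1") auto
    have Fe: "u * (u - \<tau>) = d\<^sup>2 * ((1 - u) * (1 - u + \<tau>))" using u(3) unfolding F_def by simp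
    have pu: "p \<le> u"
    proof (rule ccontr)
      assume "\<not> p \<le> u"
      hence up: "u < p" by simp
      have "u * (u - \<tau>) < p * p"
        using up ut \<tau>0 by (intro mult_strict_mono) auto
      moreover have "(1 - p) * (1 - p) < (1 - u) * (1 - u + \<tau>)"
        using up \<tau>0 p_lt by (intro mult_strict_mono) auto
      hence "d\<^sup>2 * ((1 - p) * (1 - p)) < d\<^sup>2 * ((1 - u) * (1 - u + \<tau>))"
        using d1 by (intro mult_strict_left_mono) auto
      moreover have "d\<^sup>2 * ((1 - p) * (1 - p)) = p * p" using dp by (simp add: power2_eq_square mult_ac)
      ultimately show False using Fe by linarith
    qed
    have rho: "p * (1 - u) / (u * (1 - p)) * (p * (1 - (u - \<tau>)) / ((u - \<tau>) * (1 - p))) = 1"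
    proof -
      have "p * (1 - u) / (u * (1 - p)) * (p * (1 - (u - \<tau>)) / ((u - \<tau>) * (1 - p)))
          = ((d * (1 - p)) * (d * (1-p)) * ((1 - u) * (1 - u + \<tau>))) / ((1 - p) * (1 - p) * (u * (u - \<tau>)))"
        unfolding dp by (simp add: mult_ac)
      also have "\<dots> = (d\<^sup>2 * ((1 - u) * (1 - u + \<tau>))) / (u * (u - \<tau>))"
        using p_lt by (simp add: power2_eq_square mult_ac)
      also have "\<dots> = 1" unfolding Fe[symmetric] using ut \<tau>0 by simp
      finally show ?thesis .
    qed
    interpret T: tsetup p c0 beta1 u "u - \<tau>"
    proof
      show "u - (u - \<tau>) = max ((sqrt (2*c0) - beta1)/(dval p + 1)) 0"
        using \<tau>0 unfolding \<tau>_def s_def d_def by simp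
      show "p * (1 - u) / (u * (1 - p)) * (p * (1 - (u - \<tau>)) / ((u - \<tau>) * (1 - p))) = 1" by (rule rho)
      show "sqrt (2 * c0) - beta1 \<le> 0 \<Longrightarrow> u = p" using False unfolding s_def by simp
    qed (use p_gt p_lt c0 b1 ut u1 pu \<tau>0 in auto)
    have xy: "T.xstar - T.ystar = s - beta1"
    proof -
      have "T.xstar - T.ystar = (d + 1) * \<tau>"
        unfolding T.xstar_def T.ystar_def T.d_def d_def[symmetric] by (simp add: algebra_simps)
      also have "\<dots> = s - beta1" unfolding \<tau>_def using d1 by simp
      finally show ?thesis .
    qed
    have opt: "(d-1) * T.xstar * T.ystar + d * (T.xstar + T.ystar) = 0"
    proof -
      have xs: "T.xstar = d - (d+1)*(u-\<tau>)" "T.ystar = d - (d+1)*u"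
        unfolding T.xstar_def T.ystar_def T.d_def d_def by simp_all
      have "(d-1) * T.xstar * T.ystar + d * (T.xstar + T.ystar) = - (d+1) * F u"
        unfolding xs F_def by (rule opt_ident)
      thus ?thesis using u(3) by simp
    qed
    have sg: "0 < gv beta1 T.ystar T.xstar \<longleftrightarrow> beta1 < (s\<^sup>2/2) / (s + 2*d/(d-1))"
    proof (rule sign_lemma[OF d1 s b1 xy _ _ opt])
      show "-1 \<le> T.xstar" "-1 \<le> T.ystar" using T.star_range by auto
    qed
    have e1: "s\<^sup>2/2 = c0" using s2 by simp
    have eq: "(s\<^sup>2/2) / (s + 2*d/(d-1)) = c0 / (sqrt (2 * c0) + 2 * dval p / (dval p - 1))"
      unfolding e1 unfolding s_def d_def ..
    have "0 < gv beta1 T.ystar T.xstar \<longleftrightarrow> beta1 < c0 / (sqrt (2 * c0) + 2 * dval p / (dval p - 1))"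
      using sg unfolding eq .
    with T.conv show ?thesis by blast
  qed
qed


end
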